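(* Let $n\ge 3$ and let $L^B$ be a blow-up of $L\cong\mathbf{2}^n$ with atoms $q_1,\dots,q_n$. Then: (1) if $L^B\cong L\cong\mathbf{2}^n$ (all chains are single elements), then $\beta(G(L^B)_{SR})=n-2$; (2) if $|[q_i]|\ge2$ for every $1\le i\le n$, then $\beta(G(L^B)_{SR})=2n-2$; (3) if exactly $m$ of the indices $i$ satisfy $|[q_i]|=1$, then $\beta(G(L^B)_{SR})=2n-m-2$.
   Context: Blow-up: for $L\cong\mathbf{2}^n$ with atoms $q_1,\dots,q_n$, replace each $a\in L\setminus\{0,1\}$ by a finite chain $C_a$: $a=a^1\lessdot\cdots\lessdot a^{k_a}$ ($k_a\ge1$), keep $0,1$; elements of one chain are ordered along it, and for $u\in C_a,v\in C_b$ with $a\ne b$ ($C_0=\{0\},C_1=\{1\}$), $u\le v$ iff $a<b$ in $L$. $G(L^B)$ is the zero-divisor graph of $L^B$ (vertices: nonzero elements with a nonzero element meeting them in $0$; adjacency: meet $=0$). $[x]=\{y:y^\perp=x^\perp\}$ with $x^\perp=\{z:x\wedge z=0\}$; so $[q_i]=C_{q_i}$. In a graph $G$, $u$ is maximally distant from $v$ if $d(v,w)\le d(u,v)$ for all neighbours $w$ of $u$; $u,v$ are mutually maximally distant if each is maximally distant from the other; the strong resolving graph $G_{SR}$ has as vertices those $u$ which are mutually maximally distant with some vertex, with $u,v$ adjacent iff mutually maximally distant. $\beta$ denotes the independence number. *)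

theory Defs
  imports Main
begin

text \<open>L = 2^n is modelled as the subsets of {..<n}; the atom q_i is {i}.
  An element of the blow-up L^B is a pair (a, j): the j-th element a^j of the chain C_a
  (1 <= j <= k a); 0 = ({},1) and 1 = ({..<n},1).\<close>

definition proper_elt :: "nat \<Rightarrow> nat set \<Rightarrow> bool" where
  "proper_elt n a \<longleftrightarrow> a \<subseteq> {..<n} \<and> a \<noteq> {} \<and> a \<noteq> {..<n}"

definition blowup_carrier :: "nat \<Rightarrow> (nat set \<Rightarrow> nat) \<Rightarrow> (nat set \<times> nat) set" where
  "blowup_carrier n k = {(a, j). a \<subseteq> {..<n} \<and>
      (if proper_elt n a then 1 \<le> j \<and> j \<le> k a else j = 1)}"

definition blowup_le :: "nat set \<times> nat \<Rightarrow> nat set \<times> nat \<Rightarrow> bool" where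
  "blowup_le x y \<longleftrightarrow> (fst x = fst y \<and> snd x \<le> snd y) \<or> fst x \<subset> fst y"

definition blowup_bot :: "nat set \<times> nat" where
  "blowup_bot = ({}, 1)"

definition is_meet :: "'a set \<Rightarrow> ('a \<Rightarrow> 'a \<Rightarrow> bool) \<Rightarrow> 'a \<Rightarrow> 'a \<Rightarrow> 'a \<Rightarrow> bool" where
  "is_meet V le x y z \<longleftrightarrow> z \<in> V \<and> le z x \<and> le z y \<and>
      (\<forall>w\<in>V. le w x \<and> le w y \<longrightarrow> le w z)"

definition zd_verts :: "'a set \<Rightarrow> ('a \<Rightarrow> 'a \<Rightarrow> bool) \<Rightarrow> 'a \<Rightarrow> 'a set" where
  "zd_verts V le z0 = {x \<in> V. x \<noteq> z0 \<and> (\<exists>y\<in>V. y \<noteq> z0 \<and> is_meet V le x y z0)}"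

definition zd_adj :: "'a set \<Rightarrow> ('a \<Rightarrow> 'a \<Rightarrow> bool) \<Rightarrow> 'a \<Rightarrow> 'a \<Rightarrow> 'a \<Rightarrow> bool" where
  "zd_adj V le z0 x y \<longleftrightarrow> x \<in> zd_verts V le z0 \<and> y \<in> zd_verts V le z0 \<and> x \<noteq> y
      \<and> is_meet V le x y z0"

definition perp :: "'a set \<Rightarrow> ('a \<Rightarrow> 'a \<Rightarrow> bool) \<Rightarrow> 'a \<Rightarrow> 'a \<Rightarrow> 'a set" where
  "perp V le z0 x = {z \<in> V. is_meet V le x z z0}"

definition eq_class :: "'a set \<Rightarrow> ('a \<Rightarrow> 'a \<Rightarrow> bool) \<Rightarrow> 'a \<Rightarrow> 'a \<Rightarrow> 'a set" where
  "eq_class V le z0 x = {y \<in> V. perp V le z0 y = perp V le z0 x}"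

definition walk_len :: "'a set \<Rightarrow> ('a \<Rightarrow> 'a \<Rightarrow> bool) \<Rightarrow> 'a \<Rightarrow> 'a \<Rightarrow> nat \<Rightarrow> bool" where
  "walk_len VG E u v l \<longleftrightarrow> (\<exists>ps. length ps = Suc l \<and> hd ps = u \<and> last ps = v \<and>
      set ps \<subseteq> VG \<and> (\<forall>i<l. E (ps ! i) (ps ! Suc i)))"

definition gdist :: "'a set \<Rightarrow> ('a \<Rightarrow> 'a \<Rightarrow> bool) \<Rightarrow> 'a \<Rightarrow> 'a \<Rightarrow> nat" where
  "gdist VG E u v = (LEAST l. walk_len VG E u v l)"

definition max_distant :: "'a set \<Rightarrow> ('a \<Rightarrow> 'a \<Rightarrow> bool) \<Rightarrow> 'a \<Rightarrow> 'a \<Rightarrow> bool" where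
  "max_distant VG E u v \<longleftrightarrow>
     (\<forall>w\<in>VG. E u w \<longrightarrow> gdist VG E v w \<le> gdist VG E u v)"

definition mutually_max_distant :: "'a set \<Rightarrow> ('a \<Rightarrow> 'a \<Rightarrow> bool) \<Rightarrow> 'a \<Rightarrow> 'a \<Rightarrow> bool" where
  "mutually_max_distant VG E u v \<longleftrightarrow> u \<in> VG \<and> v \<in> VG \<and>
     max_distant VG E u v \<and> max_distant VG E v u"

definition sr_verts :: "'a set \<Rightarrow> ('a \<Rightarrow> 'a \<Rightarrow> bool) \<Rightarrow> 'a set" where
  "sr_verts VG E = {u \<in> VG. \<exists>v\<in>VG. mutually_max_distant VG E u v}"

definition sr_adj :: "'a set \<Rightarrow> ('a \<Rightarrow> 'a \<Rightarrow> bool) \<Rightarrow> 'a \<Rightarrow> 'a \<Rightarrow> bool" where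
  "sr_adj VG E u v \<longleftrightarrow> u \<noteq> v \<and> mutually_max_distant VG E u v"

definition indep_number :: "'a set \<Rightarrow> ('a \<Rightarrow> 'a \<Rightarrow> bool) \<Rightarrow> nat" where
  "indep_number VG E = Max {card S | S. S \<subseteq> VG \<and> (\<forall>x\<in>S. \<forall>y\<in>S. \<not> E x y)}"

definition blowup_zd_verts :: "nat \<Rightarrow> (nat set \<Rightarrow> nat) \<Rightarrow> (nat set \<times> nat) set" where
  "blowup_zd_verts n k = zd_verts (blowup_carrier n k) blowup_le blowup_bot"

definition blowup_zd_adj :: "nat \<Rightarrow> (nat set \<Rightarrow> nat) \<Rightarrow> nat set \<times> nat \<Rightarrow> nat set \<times> nat \<Rightarrow> bool" where
  "blowup_zd_adj n k = zd_adj (blowup_carrier n k) blowup_le blowup_bot"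

definition beta_SR :: "nat \<Rightarrow> (nat set \<Rightarrow> nat) \<Rightarrow> nat" where
  "beta_SR n k = indep_number
     (sr_verts (blowup_zd_verts n k) (blowup_zd_adj n k))
     (sr_adj (blowup_zd_verts n k) (blowup_zd_adj n k))"

definition atom_class_card :: "nat \<Rightarrow> (nat set \<Rightarrow> nat) \<Rightarrow> nat \<Rightarrow> nat" where
  "atom_class_card n k i = card (eq_class (blowup_carrier n k) blowup_le blowup_bot ({i}, 1))"

end

theory Submission
  imports Defs
begin



definition lam :: "'a set set \<Rightarrow> bool" where
  "lam F \<longleftrightarrow> (\<forall>A\<in>F. \<forall>B\<in>F. A \<subseteq> B \<or> B \<subseteq> A \<or> A \<inter> B = {})"

lemma lam_bound:
  assumes "finite X"
  shows "F \<subseteq> Pow X \<Longrightarrow> {} \<notin> F \<Longrightarrow> lam F \<Longrightarrow> card F \<le> 2 * card X - 1"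
using assms proof (induction X arbitrary: F rule: finite_induct)
  case empty
  then have "F = {}" by auto
  then show ?case by simp
next
  case (insert x X0)
  show ?case
  proof (cases "X0 = {}")
    case True
    have "Pow {x} = {{}, {x}}" by blast
    then have "F \<subseteq> {{x}}" using insert.prems True by auto
    then have "card F \<le> 1" using card_mono[of "{{x}}" F] by simp
    then show ?thesis using True by simp
  next
    case False
    have finF: "finite F" using insert.prems(1) insert.hyps(1)
      by (meson finite_Pow_iff finite_insert finite_subset)
    define G where "G = {A \<in> F. A \<noteq> {x} \<and> \<not> (x \<in> A \<and> A - {x} \<in> F)}"
    define H where "H = {A \<in> F. x \<in> A \<and> A - {x} \<in> F}"
    have FGH: "F \<subseteq> G \<union> {{x}} \<union> H" unfolding G_def H_def by auto
    have HH: "A \<subseteq> B" if "A \<in> H" "B \<in> H" for A B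
    proof -
      have AF: "A \<in> F" "x \<in> A" "A - {x} \<in> F" and BF: "B \<in> F" "x \<in> B" "B - {x} \<in> F"
        using that unfolding H_def by auto
      have "A \<inter> B \<noteq> {}" using AF BF by blast
      then have "A \<subseteq> B \<or> B \<subseteq> A" using insert.prems(3) AF(1) BF(1) unfolding lam_def by metis
      moreover have "A \<subseteq> B" if BA: "B \<subseteq> A"
      proof -
        have d: "B \<subseteq> A - {x} \<or> A - {x} \<subseteq> B \<or> B \<inter> (A - {x}) = {}"
          using insert.prems(3) AF(3) BF(1) unfolding lam_def by metis
        have ne: "B - {x} \<noteq> {}" using BF(3) insert.prems(2) by metis
        have "\<not> B \<subseteq> A - {x}" using BF(2) by blast
        moreover have "B \<inter> (A - {x}) \<noteq> {}" using ne BA by blast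
        ultimately have "A - {x} \<subseteq> B" using d by metis
        then show "A \<subseteq> B" using BF(2) by blast
      qed
      ultimately show ?thesis by metis
    qed
    have finH: "finite H" using finF unfolding H_def by auto
    have H1: "card H \<le> 1"
      using HH card_le_Suc0_iff_eq[OF finH] by auto
    have finG: "finite G" using finF unfolding G_def by auto
    have inj: "inj_on (\<lambda>A. A - {x}) G"
    proof (rule inj_onI)
      fix A B assume A: "A \<in> G" and B: "B \<in> G" and e: "A - {x} = B - {x}"
      show "A = B"
      proof (cases "x \<in> A \<longleftrightarrow> x \<in> B")
        case True then show ?thesis using e by blast
      next
        case False
        show ?thesis
        proof (cases "x \<in> A")
          case True
          then have "x \<notin> B" using False by blast
          then have "A - {x} = B" using e by blast
          then show ?thesis using A B True unfolding G_def by auto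
        next
          case xA: False
          then have "x \<in> B" using False by blast
          then have "B - {x} = A" using e xA by blast
          then show ?thesis using A B \<open>x \<in> B\<close> unfolding G_def by auto
        qed
      qed
    qed
    define G' where "G' = (\<lambda>A. A - {x}) ` G"
    have "G' \<subseteq> Pow X0" using insert.prems(1) unfolding G'_def G_def by auto
    moreover have "{} \<notin> G'"
    proof
      assume "{} \<in> G'"
      then obtain A where "A \<in> G" "A - {x} = {}" unfolding G'_def by auto
      then have "A \<in> F" "A \<noteq> {x}" "A \<subseteq> {x}" unfolding G_def by auto
      then show False using insert.prems(2) by (metis subset_singleton_iff)
    qed
    moreover have "lam G'"
      unfolding lam_def G'_def
    proof (intro ballI)
      fix A' B' assume "A' \<in> (\<lambda>A. A - {x}) ` G" "B' \<in> (\<lambda>A. A - {x}) ` G"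
      then obtain A B where "A \<in> F" "B \<in> F" "A' = A - {x}" "B' = B - {x}"
        unfolding G_def by auto
      moreover have "A \<subseteq> B \<or> B \<subseteq> A \<or> A \<inter> B = {}" using insert.prems(3) calculation
        unfolding lam_def by blast
      ultimately show "A' \<subseteq> B' \<or> B' \<subseteq> A' \<or> A' \<inter> B' = {}" by blast
    qed
    ultimately have IH: "card G' \<le> 2 * card X0 - 1" using insert.IH by blast
    have "card G' = card G" unfolding G'_def using card_image[OF inj] .
    have "card F \<le> card (G \<union> {{x}} \<union> H)" using FGH finG finH by (intro card_mono) auto
    also have "\<dots> \<le> card (G \<union> {{x}}) + card H" by (rule card_Un_le)
    also have "\<dots> \<le> card G + card {{x}} + card H" using card_Un_le[of G "{{x}}"] by simp
    finally have "card F \<le> card G + 2" using H1 by simp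
    moreover have "card X0 \<ge> 1" using False insert.hyps(1) by (simp add: Suc_leI card_gt_0_iff)
    ultimately show ?thesis using IH \<open>card G' = card G\<close> insert.hyps by simp
  qed
qed



lemma walk0: "walk_len VG E u v 0 \<longleftrightarrow> u \<in> VG \<and> u = v"
  unfolding walk_len_def
  apply (rule iffI)
   apply (auto simp: length_Suc_conv)[1]
  apply (rule exI[of _ "[u]"]) by auto

lemma walk1: "walk_len VG E u v (Suc 0) \<longleftrightarrow> u \<in> VG \<and> v \<in> VG \<and> E u v"
  unfolding walk_len_def
  apply (rule iffI)
   apply (auto simp: length_Suc_conv)[1]
  apply (rule exI[of _ "[u,v]"]) by auto

lemma walk2: "walk_len VG E u v (Suc (Suc 0)) \<longleftrightarrow> (\<exists>w\<in>VG. u \<in> VG \<and> v \<in> VG \<and> E u w \<and> E w v)"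
  unfolding walk_len_def
  apply (rule iffI)
   apply (clarsimp simp: length_Suc_conv less_Suc_eq)
   apply (metis less_Suc_eq nth_Cons_0 nth_Cons_Suc lessI zero_less_Suc)
  apply clarify
  apply (rule_tac x="[u,w,v]" in exI) by (auto simp: less_Suc_eq)

lemma walk3: "u \<in> VG \<Longrightarrow> v \<in> VG \<Longrightarrow> w1 \<in> VG \<Longrightarrow> w2 \<in> VG \<Longrightarrow> E u w1 \<Longrightarrow> E w1 w2 \<Longrightarrow> E w2 v
   \<Longrightarrow> walk_len VG E u v (Suc (Suc (Suc 0)))"
  unfolding walk_len_def
  apply (rule exI[of _ "[u,w1,w2,v]"]) by (auto simp: less_Suc_eq)

lemma gdist_eqI: "walk_len VG E u v d \<Longrightarrow> (\<And>l. l < d \<Longrightarrow> \<not> walk_len VG E u v l) \<Longrightarrow> gdist VG E u v = d"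
  unfolding gdist_def by (rule Least_equality) (auto simp: not_less[symmetric])




locale bl =
  fixes n :: nat and k :: "nat set \<Rightarrow> nat"
  assumes n3: "n \<ge> 3" and kpos: "\<forall>a. proper_elt n a \<longrightarrow> 1 \<le> k a"
begin

abbreviation V where "V \<equiv> blowup_carrier n k"
definition P where "P = {x. proper_elt n (fst x) \<and> 1 \<le> snd x \<and> snd x \<le> k (fst x)}"
abbreviation E where "E \<equiv> blowup_zd_adj n k"

lemma V_iff: "x \<in> V \<longleftrightarrow> fst x \<subseteq> {..<n} \<and>
   (if proper_elt n (fst x) then 1 \<le> snd x \<and> snd x \<le> k (fst x) else snd x = 1)"
  by (cases x) (simp add: blowup_carrier_def)

lemma V_snd: "x \<in> V \<Longrightarrow> 1 \<le> snd x"
  unfolding V_iff by (auto split: if_splits)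

lemma P_iff: "(a, j) \<in> P \<longleftrightarrow> proper_elt n a \<and> 1 \<le> j \<and> j \<le> k a"
  by (simp add: P_def)

lemma P1: "proper_elt n a \<Longrightarrow> (a, 1) \<in> P"
  using kpos by (simp add: P_def)

lemma P_V: "x \<in> P \<Longrightarrow> x \<in> V"
  unfolding V_iff P_def proper_elt_def by auto

lemma P_fst: "x \<in> P \<Longrightarrow> fst x \<noteq> {} \<and> fst x \<subseteq> {..<n} \<and> fst x \<noteq> {..<n}"
  unfolding P_def proper_elt_def by auto

lemma proper_cmp: "proper_elt n a \<Longrightarrow> proper_elt n ({..<n} - a)"
  unfolding proper_elt_def by auto

lemma proper_single: "i < n \<Longrightarrow> proper_elt n {i}"
proof -
  assume i: "i < n"
  have "{i} \<noteq> {..<n}"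
  proof
    assume "{i} = {..<n}"
    then have "card {i} = card {..<n}" by simp
    then show False using n3 by simp
  qed
  then show ?thesis using i unfolding proper_elt_def by auto
qed

lemma meet_iff:
  assumes "x \<in> V" "y \<in> V"
  shows "is_meet V blowup_le x y blowup_bot \<longleftrightarrow> fst x \<inter> fst y = {}"
proof
  assume m: "is_meet V blowup_le x y blowup_bot"
  show "fst x \<inter> fst y = {}"
  proof (rule ccontr)
    assume ne: "fst x \<inter> fst y \<noteq> {}"
    define c where "c = fst x \<inter> fst y"
    have "(c, 1) \<in> V"
    proof -
      have "c \<subseteq> {..<n}" using assms unfolding V_iff c_def by auto
      then show ?thesis using kpos unfolding blowup_carrier_def by auto
    qed
    moreover have "blowup_le (c, 1) x"
      using V_snd[OF assms(1)] unfolding blowup_le_def c_def by auto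
    moreover have "blowup_le (c, 1) y"
      using V_snd[OF assms(2)] unfolding blowup_le_def c_def by auto
    ultimately have "blowup_le (c, 1) blowup_bot" using m unfolding is_meet_def by blast
    then show False using ne unfolding blowup_le_def blowup_bot_def c_def by auto
  qed
next
  assume d: "fst x \<inter> fst y = {}"
  have botV: "blowup_bot \<in> V" unfolding blowup_bot_def blowup_carrier_def proper_elt_def by auto
  have lb: "blowup_le blowup_bot z" if "z \<in> V" for z
  proof (cases "fst z = {}")
    case True
    then have "snd z = 1" using that unfolding V_iff proper_elt_def by auto
    then show ?thesis using True unfolding blowup_le_def blowup_bot_def by auto
  next
    case False
    then show ?thesis unfolding blowup_le_def blowup_bot_def by auto
  qed
  have "blowup_le w blowup_bot" if "w \<in> V" "blowup_le w x" "blowup_le w y" for w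
  proof -
    have "fst w \<subseteq> fst x" "fst w \<subseteq> fst y" using that(2,3) unfolding blowup_le_def by auto
    then have "fst w = {}" using d by auto
    then show ?thesis using lb[OF that(1)] lb[OF botV] that(1) unfolding V_iff blowup_le_def blowup_bot_def proper_elt_def
      by auto
  qed
  then show "is_meet V blowup_le x y blowup_bot"
    unfolding is_meet_def using botV lb assms by blast
qed

lemma verts_eq: "blowup_zd_verts n k = P"
proof (rule set_eqI)
  fix x
  show "x \<in> blowup_zd_verts n k \<longleftrightarrow> x \<in> P"
  proof
    assume "x \<in> blowup_zd_verts n k"
    then obtain y where xV: "x \<in> V" "x \<noteq> blowup_bot" and yV: "y \<in> V" "y \<noteq> blowup_bot"
      and m: "is_meet V blowup_le x y blowup_bot"
      unfolding blowup_zd_verts_def zd_verts_def by auto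
    have ne: "fst z \<noteq> {}" if "z \<in> V" "z \<noteq> blowup_bot" for z
    proof
      assume "fst z = {}"
      then have "snd z = 1" using that unfolding V_iff proper_elt_def by auto
      then show False using that \<open>fst z = {}\<close> unfolding blowup_bot_def by (cases z) auto
    qed
    have d: "fst x \<inter> fst y = {}" using meet_iff[OF xV(1) yV(1)] m by simp
    have "fst x \<noteq> {..<n}" using ne[OF yV] d yV(1) unfolding V_iff by auto
    then have "proper_elt n (fst x)" using ne[OF xV] xV(1) unfolding V_iff proper_elt_def by auto
    then show "x \<in> P" using xV(1) unfolding V_iff P_def by auto
  next
    assume xP: "x \<in> P"
    define y where "y = ({..<n} - fst x, 1::nat)"
    have py: "proper_elt n (fst y)" using xP proper_cmp unfolding y_def P_def by auto
    have yP: "y \<in> P" using P1[OF py] unfolding y_def by simp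
    have "y \<noteq> blowup_bot" using py unfolding blowup_bot_def proper_elt_def by auto
    moreover have "x \<noteq> blowup_bot" using P_fst[OF xP] unfolding blowup_bot_def by auto
    moreover have "is_meet V blowup_le x y blowup_bot"
      using meet_iff[OF P_V[OF xP] P_V[OF yP]] unfolding y_def by auto
    ultimately show "x \<in> blowup_zd_verts n k"
      using P_V[OF xP] P_V[OF yP] unfolding blowup_zd_verts_def zd_verts_def by blast
  qed
qed

lemma E_iff: "E x y \<longleftrightarrow> x \<in> P \<and> y \<in> P \<and> fst x \<inter> fst y = {}"
proof -
  have "x \<in> P \<Longrightarrow> y \<in> P \<Longrightarrow> fst x \<inter> fst y = {} \<Longrightarrow> x \<noteq> y"
    using P_fst by blast
  moreover have "x \<in> P \<Longrightarrow> y \<in> P \<Longrightarrow> is_meet V blowup_le x y blowup_bot \<longleftrightarrow> fst x \<inter> fst y = {}"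
    using meet_iff P_V by blast
  ultimately show ?thesis
    using verts_eq
    unfolding blowup_zd_adj_def zd_adj_def blowup_zd_verts_def by auto
qed

definition D where
  "D u v = (if u = v then 0 else if fst u \<inter> fst v = {} then 1
     else if fst u \<union> fst v \<noteq> {..<n} then 2 else (3::nat))"

lemma cmpP: "x \<in> P \<Longrightarrow> ({..<n} - fst x, 1) \<in> P"
  using P1 proper_cmp P_def by auto

lemma dist: assumes u: "u \<in> P" and v: "v \<in> P" shows "gdist P E u v = D u v"
proof (cases "u = v")
  case True
  then show ?thesis using u by (intro gdist_eqI) (auto simp: walk0 D_def)
next
  case neq: False
  show ?thesis
  proof (cases "fst u \<inter> fst v = {}")
    case True
    then show ?thesis using u v neq by (intro gdist_eqI) (auto simp: walk0 walk1 E_iff D_def)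
  next
    case int: False
    show ?thesis
    proof (cases "fst u \<union> fst v \<noteq> {..<n}")
      case True
      define w where "w = ({..<n} - (fst u \<union> fst v), 1::nat)"
      have "proper_elt n (fst w)" using True P_fst[OF u] P_fst[OF v] unfolding w_def proper_elt_def by auto
      then have wP: "w \<in> P" using P1 unfolding w_def by simp
      have "walk_len P E u v (Suc (Suc 0))" unfolding walk2 E_iff
        using wP u v by (intro bexI[of _ w]) (auto simp: w_def)
      then have "walk_len P E u v 2" by (simp add: numeral_2_eq_2)
      moreover have "l < 2 \<Longrightarrow> \<not> walk_len P E u v l" for l
        using neq int by (auto simp: walk0 walk1 E_iff less_Suc_eq numeral_2_eq_2)
      ultimately show ?thesis using neq int True unfolding D_def by (intro gdist_eqI) auto
    next
      case False
      have "walk_len P E u v (Suc (Suc (Suc 0)))"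
        using cmpP[OF u] cmpP[OF v] u v False P_fst[OF u] P_fst[OF v]
        by (intro walk3[of u P v "({..<n} - fst u, 1)" "({..<n} - fst v, 1)"]) (auto simp: E_iff)
      then have "walk_len P E u v 3" by (simp add: numeral_3_eq_3)
      moreover have "l < 3 \<Longrightarrow> \<not> walk_len P E u v l" for l
      proof -
        assume l: "l < 3"
        have "\<not> walk_len P E u v (Suc (Suc 0))"
        proof
          assume "walk_len P E u v (Suc (Suc 0))"
          then obtain w where "w \<in> P" "fst u \<inter> fst w = {}" "fst w \<inter> fst v = {}"
            unfolding walk2 E_iff by auto
          then show False using P_fst[of w] False by blast
        qed
        then show ?thesis using l neq int by (auto simp: walk0 walk1 E_iff less_Suc_eq numeral_3_eq_3)
      qed
      ultimately show ?thesis using neq int False unfolding D_def by (intro gdist_eqI) auto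
    qed
  qed
qed

end


context bl begin

lemma md_iff: assumes "u \<in> P" "v \<in> P"
  shows "max_distant P E u v \<longleftrightarrow> (\<forall>w\<in>P. fst u \<inter> fst w = {} \<longrightarrow> D v w \<le> D u v)"
  unfolding max_distant_def using assms dist E_iff[of u] by auto

lemma md_of:
  assumes u: "u \<in> P" and v: "v \<in> P" and neq: "u \<noteq> v" and int: "fst u \<inter> fst v \<noteq> {}"
    and nsub: "\<not> fst u \<subset> fst v"
  shows "max_distant P E u v"
  unfolding md_iff[OF u v]
proof (intro ballI impI)
  fix w assume w: "w \<in> P" and d: "fst u \<inter> fst w = {}"
  show "D v w \<le> D u v"
  proof (cases "fst u \<union> fst v = {..<n}")
    case True
    then have "D u v = 3" using neq int unfolding D_def by auto
    then show ?thesis unfolding D_def by auto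
  next
    case False
    then have Duv: "D u v = 2" using neq int unfolding D_def by auto
    have "\<not> (fst v \<union> fst w = {..<n} \<and> fst v \<inter> fst w \<noteq> {})"
    proof
      assume h: "fst v \<union> fst w = {..<n} \<and> fst v \<inter> fst w \<noteq> {}"
      have "fst u \<subseteq> fst v" using h d P_fst[OF u] by blast
      then have "fst u = fst v" using nsub by blast
      then show False using h d by blast
    qed
    then show ?thesis using Duv unfolding D_def by auto
  qed
qed

lemma mmd_iff: assumes u: "u \<in> P" and v: "v \<in> P"
  shows "mutually_max_distant P E u v \<longleftrightarrow>
    u \<noteq> v \<and> fst u \<inter> fst v \<noteq> {} \<and> \<not> fst u \<subset> fst v \<and> \<not> fst v \<subset> fst u"
proof
  assume "u \<noteq> v \<and> fst u \<inter> fst v \<noteq> {} \<and> \<not> fst u \<subset> fst v \<and> \<not> fst v \<subset> fst u"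
  then show "mutually_max_distant P E u v"
    unfolding mutually_max_distant_def using md_of[OF u v] md_of[OF v u] u v by (auto simp: Int_commute)
next
  assume m: "mutually_max_distant P E u v"
  have muv: "\<forall>w\<in>P. fst u \<inter> fst w = {} \<longrightarrow> D v w \<le> D u v"
    using m md_iff[OF u v] unfolding mutually_max_distant_def by blast
  have mvu: "\<forall>w\<in>P. fst v \<inter> fst w = {} \<longrightarrow> D u w \<le> D v u"
    using m md_iff[OF v u] unfolding mutually_max_distant_def by blast
  have Dsym: "D x y = D y x" for x y unfolding D_def by (auto simp: Int_commute Un_commute)
  have neq: "u \<noteq> v"
  proof
    assume "u = v"
    have "D v ({..<n} - fst u, 1) \<le> D u v" using muv cmpP[OF u] by auto
    moreover have "D v ({..<n} - fst u, 1) = 1"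
    proof -
      have "fst v \<noteq> {..<n} - fst u" using \<open>u = v\<close> P_fst[OF u] by blast
      then have "v \<noteq> ({..<n} - fst u, 1)" by auto
      then show ?thesis using \<open>u = v\<close> unfolding D_def by auto
    qed
    ultimately show False using \<open>u = v\<close> unfolding D_def by auto
  qed
  have int: "fst u \<inter> fst v \<noteq> {}"
  proof
    assume dj: "fst u \<inter> fst v = {}"
    then have D1: "D u v = 1" using neq unfolding D_def by auto
    (* singleton argument: for x \<in> fst v, ({x},1) must equal v *)
    have sing: "\<And>a b. a \<in> P \<Longrightarrow> b \<in> P \<Longrightarrow> fst a \<inter> fst b = {} \<Longrightarrow> D a b = 1 \<Longrightarrow>
        (\<forall>w\<in>P. fst a \<inter> fst w = {} \<longrightarrow> D b w \<le> D a b) \<Longrightarrow> \<exists>x. fst b = {x}"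
    proof -
      fix a b assume a: "a \<in> P" and b: "b \<in> P" and dab: "fst a \<inter> fst b = {}" and "D a b = 1"
        and h: "\<forall>w\<in>P. fst a \<inter> fst w = {} \<longrightarrow> D b w \<le> D a b"
      obtain x where x: "x \<in> fst b" using P_fst[OF b] by blast
      have xn: "x < n" using x P_fst[OF b] by auto
      have wP: "({x}, 1) \<in> P" using P1[OF proper_single[OF xn]] .
      have "fst a \<inter> fst ({x}, 1::nat) = {}" using x dab by auto
      then have "D b ({x}, 1) \<le> 1" using h wP \<open>D a b = 1\<close> by metis
      then have "b = ({x}, 1)" using x unfolding D_def by (auto split: if_splits)
      then show "\<exists>x. fst b = {x}" by auto
    qed
    obtain x where x: "fst v = {x}" using sing[OF u v dj D1 muv] by blast
    obtain y where y: "fst u = {y}" using sing[OF v u] dj D1 Dsym mvu u v by (metis Int_commute)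
    have "fst u \<union> fst v = {..<n}"
    proof (rule ccontr)
      assume nu: "fst u \<union> fst v \<noteq> {..<n}"
      define w where "w = ({..<n} - fst u, 1::nat)"
      have wP: "w \<in> P" using cmpP[OF u] unfolding w_def .
      have "D v w \<le> 1" using muv wP D1 unfolding w_def by auto
      moreover have "v \<noteq> w" "fst v \<inter> fst w \<noteq> {}"
        using nu dj P_fst[OF u] P_fst[OF v] unfolding w_def by auto
      ultimately show False unfolding D_def by (auto split: if_splits)
    qed
    then have "{..<n} = {x, y}" using x y by auto
    then have "card {..<n} \<le> 2" by (simp add: card_insert_if)
    then show False using n3 by simp
  qed
  have nsub: "\<not> fst a \<subset> fst b" if a: "a \<in> P" and b: "b \<in> P" and ab: "a \<noteq> b"
    and h: "\<forall>w\<in>P. fst a \<inter> fst w = {} \<longrightarrow> D b w \<le> D a b" for a b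
  proof
    assume s: "fst a \<subset> fst b"
    have Dab: "D a b = 2" using s ab P_fst[OF a] P_fst[OF b] unfolding D_def by auto
    define w where "w = ({..<n} - fst a, 1::nat)"
    have wP: "w \<in> P" using cmpP[OF a] unfolding w_def .
    have "D b w \<le> 2" using h wP Dab unfolding w_def by auto
    moreover have "b \<noteq> w"
    proof
      assume "b = w"
      then have "fst b = {..<n} - fst a" unfolding w_def by simp
      then show False using s P_fst[OF a] by auto
    qed
    moreover have "fst b \<inter> fst w \<noteq> {}" "fst b \<union> fst w = {..<n}"
      using s P_fst[OF a] P_fst[OF b] unfolding w_def by auto
    ultimately show False unfolding D_def by auto
  qed
  show "u \<noteq> v \<and> fst u \<inter> fst v \<noteq> {} \<and> \<not> fst u \<subset> fst v \<and> \<not> fst v \<subset> fst u"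
    using neq int nsub[OF u v neq muv] nsub[OF v u _ mvu] neq by auto
qed

end


lemma sing_ne: "2 \<le> t \<Longrightarrow> {i} \<noteq> {..<(t::nat)}"
proof
  assume "2 \<le> t" "{i} = {..<t}"
  then have "0 \<in> {i}" "1 \<in> {i}" by auto
  then show False by auto
qed

context bl begin

abbreviation SRV where "SRV \<equiv> sr_verts P E"
abbreviation R where "R \<equiv> sr_adj P E"

lemma SRV_P: "SRV \<subseteq> P" unfolding sr_verts_def by auto

lemma forbidden: assumes u: "u \<in> P" and fu: "fst u = {i}" and ki: "k {i} = 1" and v: "v \<in> P"
  shows "\<not> mutually_max_distant P E u v"
proof
  assume "mutually_max_distant P E u v"
  then have h: "u \<noteq> v" "fst u \<inter> fst v \<noteq> {}" "\<not> fst u \<subset> fst v" using mmd_iff[OF u v] by auto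
  have "fst v \<subseteq> {..<n}" using P_fst[OF v] by auto
  have "i \<in> fst v" using h(2) fu by auto
  then have "fst v = {i}" using h(3) fu by (auto simp: psubset_eq)
  then have "snd v = 1" using v ki unfolding P_def by auto
  moreover have "snd u = 1" using u ki fu unfolding P_def by auto
  ultimately show False using h(1) fu \<open>fst v = {i}\<close> by (simp add: prod_eq_iff)
qed

definition m0 where "m0 = card {i. i < n \<and> k {i} = 1}"

lemma upper: assumes S: "S \<subseteq> SRV" and ind: "\<forall>x\<in>S. \<forall>y\<in>S. \<not> R x y"
  shows "card S \<le> 2 * n - 2 - m0"
proof -
  have SP: "S \<subseteq> P" using S SRV_P by auto
  have noR: "x \<in> S \<Longrightarrow> y \<in> S \<Longrightarrow> x \<noteq> y \<Longrightarrow> \<not> mutually_max_distant P E x y" for x y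
    using ind unfolding sr_adj_def by blast
  have inj: "inj_on fst S"
  proof (rule inj_onI)
    fix x y assume x: "x \<in> S" and y: "y \<in> S" and e: "fst x = fst y"
    show "x = y"
    proof (rule ccontr)
      assume "x \<noteq> y"
      then have "mutually_max_distant P E x y"
      proof -
        have xP: "x \<in> P" and yP: "y \<in> P" using SP x y by auto
        show ?thesis using mmd_iff[OF xP yP] e P_fst[OF xP] \<open>x \<noteq> y\<close> by auto
      qed
      then show False using noR x y \<open>x \<noteq> y\<close> by blast
    qed
  qed
  define Fm where "Fm = fst ` S"
  define I where "I = {i. i < n \<and> k {i} = 1}"
  define M where "M = (\<lambda>i. {i}) ` I"
  define T where "T = insert {..<n} (Fm \<union> M)"
  have cardF: "card Fm = card S" unfolding Fm_def using card_image[OF inj] .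
  have cardM: "card M = m0" unfolding M_def m0_def I_def by (subst card_image) (auto simp: inj_on_def)
  have finF: "finite Fm"
  proof -
    have "Fm \<subseteq> Pow {..<n}" unfolding Fm_def using SP P_fst by auto
    then show ?thesis using finite_subset by blast
  qed
  have finM: "finite M" unfolding M_def I_def by auto
  have FM: "Fm \<inter> M = {}"
  proof (rule ccontr)
    assume "Fm \<inter> M \<noteq> {}"
    then obtain x i where x: "x \<in> S" "fst x = {i}" "k {i} = 1"
      unfolding Fm_def M_def I_def by auto
    then have "x \<in> SRV" using S by auto
    then obtain v where "v \<in> P" "mutually_max_distant P E x v" unfolding sr_verts_def by auto
    then show False using forbidden[of x i v] x SP by auto
  qed
  have topF: "{..<n} \<notin> Fm" unfolding Fm_def using SP P_fst by auto
  have topM: "{..<n} \<notin> M" unfolding M_def I_def using proper_single unfolding proper_elt_def by auto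
  have cardT: "card T = card Fm + card M + 1"
    unfolding T_def using finF finM FM topF topM by (simp add: card_Un_disjoint)
  have "T \<subseteq> Pow {..<n}" unfolding T_def Fm_def M_def I_def using SP P_fst by auto
  moreover have "{} \<notin> T"
  proof -
    have "0 \<in> {..<n}" using n3 by auto
    then have "{..<n} \<noteq> {}" by blast
    moreover have "{} \<notin> Fm" unfolding Fm_def using SP P_fst by force
    moreover have "{} \<notin> M" unfolding M_def by auto
    ultimately show ?thesis unfolding T_def by auto
  qed
  moreover have "lam T"
    unfolding lam_def
  proof (intro ballI)
    fix A B assume A: "A \<in> T" and B: "B \<in> T"
    have sub: "X \<subseteq> {..<n}" if "X \<in> T" for X
      using that unfolding T_def Fm_def M_def I_def using SP P_fst by auto
    have lamF: "A \<subseteq> B \<or> B \<subseteq> A \<or> A \<inter> B = {}" if Af: "A \<in> Fm" and Bf: "B \<in> Fm"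
    proof -
      obtain x where x: "x \<in> S" "A = fst x" using Af unfolding Fm_def by blast
      obtain y where y: "y \<in> S" "B = fst y" using Bf unfolding Fm_def by blast
      show ?thesis
      proof (cases "x = y")
        case True then show ?thesis using x y by auto
      next
        case False
        then have "\<not> mutually_max_distant P E x y" using noR x y by blast
        then show ?thesis using mmd_iff[of x y] x y SP False by auto
      qed
    qed
    show "A \<subseteq> B \<or> B \<subseteq> A \<or> A \<inter> B = {}"
    proof (cases "A = {..<n} \<or> B = {..<n}")
      case True then show ?thesis using sub A B by auto
    next
      case False
      then have A': "A \<in> Fm \<union> M" and B': "B \<in> Fm \<union> M" using A B unfolding T_def by auto
      show ?thesis
      proof (cases "A \<in> M \<or> B \<in> M")
        case True then show ?thesis unfolding M_def by auto
      next
        case False then show ?thesis using A' B' lamF by auto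
      qed
    qed
  qed
  ultimately have "card T \<le> 2 * card {..<n::nat} - 1" using lam_bound[of "{..<n}" T] by auto
  then show ?thesis using cardT cardF cardM by simp
qed

lemma lower: "\<exists>S. S \<subseteq> SRV \<and> (\<forall>x\<in>S. \<forall>y\<in>S. \<not> R x y) \<and> card S = 2 * n - 2 - m0"
proof -
  define I where "I = {i. i < n \<and> k {i} \<noteq> 1}"
  define A1 where "A1 = (\<lambda>i. ({i}, 1::nat)) ` I"
  define A2 where "A2 = (\<lambda>t. ({..<t}, 1::nat)) ` {2..<n}"
  define S where "S = A1 \<union> A2"
  have A1P: "x \<in> P" if "x \<in> A1" for x
    using that P1 proper_single unfolding A1_def I_def by auto
  have pt: "proper_elt n {..<t}" if "t \<in> {2..<n}" for t
  proof -
    have "0 \<in> {..<t}" "t \<in> {..<n}" "t \<notin> {..<t}" "{..<t} \<subseteq> {..<n}" using that by auto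
    then show ?thesis unfolding proper_elt_def by blast
  qed
  have A2P: "x \<in> P" if "x \<in> A2" for x
    using that P1 pt unfolding A2_def by auto
  have "S \<subseteq> SRV"
  proof
    fix x assume "x \<in> S"
    then consider "x \<in> A1" | "x \<in> A2" unfolding S_def by auto
    then show "x \<in> SRV"
    proof cases
      case 1
      then obtain i where i: "i < n" "k {i} \<noteq> 1" "x = ({i}, 1)" unfolding A1_def I_def by auto
      have "k {i} \<ge> 1" using kpos proper_single[OF i(1)] by auto
      then have vP: "({i}, 2) \<in> P" using i proper_single unfolding P_def by auto
      have xP: "x \<in> P" using A1P 1 by auto
      have "mutually_max_distant P E x ({i}, 2)" using mmd_iff[OF xP vP] i by auto
      then show ?thesis using xP vP unfolding sr_verts_def by auto
    next
      case 2
      then obtain t where t: "t \<in> {2..<n}" "x = ({..<t}, 1)" unfolding A2_def by auto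
      define b where "b = insert 0 {t..<n}"
      have t2: "2 \<le> t" "t < n" using t by auto
      have b1: "1 \<notin> b" using t2 unfolding b_def by simp
      have bt: "t \<in> b" "0 \<in> b" using t2 unfolding b_def by simp_all
      have bsub: "b \<subseteq> {..<n}" using t2 unfolding b_def by auto
      have "1 \<in> {..<n}" using t2 by simp
      then have "b \<noteq> {..<n}" using b1 by blast
      then have "proper_elt n b" using bsub bt unfolding proper_elt_def by blast
      then have vP: "(b, 1) \<in> P" using P1 by auto
      have xP: "x \<in> P" using A2P 2 by auto
      have l1: "1 \<in> {..<t}" "0 \<in> {..<t}" "t \<notin> {..<t}" using t2 by simp_all
      have "{..<t} \<inter> b \<noteq> {}" "\<not> {..<t} \<subseteq> b" "\<not> b \<subseteq> {..<t}"
        using l1 bt b1 by blast+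
      then have "x \<noteq> (b, 1) \<and> fst x \<inter> fst (b, 1::nat) \<noteq> {} \<and> \<not> fst x \<subset> fst (b, 1::nat) \<and> \<not> fst (b, 1::nat) \<subset> fst x"
        using t(2) by auto
      then have "mutually_max_distant P E x (b, 1)" using mmd_iff[OF xP vP] by blast
      then show ?thesis using xP vP unfolding sr_verts_def by auto
    qed
  qed
  moreover have "\<forall>x\<in>S. \<forall>y\<in>S. \<not> R x y"
  proof (intro ballI notI)
    fix x y assume x: "x \<in> S" and y: "y \<in> S" and r: "R x y"
    have xP: "x \<in> P" using x A1P A2P unfolding S_def by blast
    have yP: "y \<in> P" using y A1P A2P unfolding S_def by blast
    have h: "x \<noteq> y" "fst x \<inter> fst y \<noteq> {}" "\<not> fst x \<subset> fst y" "\<not> fst y \<subset> fst x"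
      using r mmd_iff[OF xP yP] unfolding sr_adj_def by auto
    have sx: "snd x = 1" "snd y = 1" using x y unfolding S_def A1_def A2_def by auto
    have "fst x = fst y"
    proof -
      have lx: "(\<exists>i. fst x = {i}) \<or> (\<exists>t. fst x = {..<t} \<and> 2 \<le> t)" using x unfolding S_def A1_def A2_def by auto
      have ly: "(\<exists>i. fst y = {i}) \<or> (\<exists>t. fst y = {..<t} \<and> 2 \<le> t)" using y unfolding S_def A1_def A2_def by auto
      show ?thesis
      proof -
        { fix i j assume "fst x = {i}" "fst y = {j}" then have ?thesis using h by auto }
        moreover
        { fix i t assume a: "fst x = {i}" "fst y = {..<t}" "2 \<le> t"
          then have "i < t" using h by auto
          then have "fst x \<subseteq> fst y" using a by auto
          moreover have "fst x \<noteq> fst y" using a sing_ne by metis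
          ultimately have False using h by auto }
        moreover
        { fix i t assume a: "fst y = {i}" "fst x = {..<t}" "2 \<le> t"
          then have "i < t" using h by auto
          then have "fst y \<subseteq> fst x" using a by auto
          moreover have "fst y \<noteq> fst x" using a sing_ne by metis
          ultimately have False using h by auto }
        moreover
        { fix t s assume a: "fst x = {..<t}" "fst y = {..<s}"
          have "t \<le> s \<or> s \<le> t" by auto
          then have ?thesis using h a by (auto simp: lessThan_subset_iff psubset_eq) }
        ultimately show ?thesis using lx ly by blast
      qed
    qed
    then show False using h(1) sx by (simp add: prod_eq_iff)
  qed
  moreover have "card S = 2 * n - 2 - m0"
  proof -
    have c1: "card A1 = n - m0"
    proof -
      have "card A1 = card I" unfolding A1_def by (subst card_image) (auto simp: inj_on_def)
      moreover have "I = {..<n} - {i. i < n \<and> k {i} = 1}" unfolding I_def by auto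
      moreover have "card ({..<n} - {i. i < n \<and> k {i} = 1}) = n - m0"
        unfolding m0_def by (subst card_Diff_subset) auto
      ultimately show ?thesis by simp
    qed
    have c2: "card A2 = n - 2" unfolding A2_def
      by (subst card_image) (auto simp: inj_on_def lessThan_eq_iff)
    have dj: "A1 \<inter> A2 = {}"
    proof -
      show ?thesis unfolding A1_def A2_def using sing_ne by auto
    qed
    have "m0 \<le> n" unfolding m0_def using card_mono[of "{..<n}" "{i. i < n \<and> k {i} = 1}"] by auto
    then show ?thesis unfolding S_def using c1 c2 dj n3
      by (simp add: card_Un_disjoint A1_def A2_def I_def)
  qed
  ultimately show ?thesis by blast
qed

lemma beta_eq: "beta_SR n k = 2 * n - 2 - m0"
proof -
  let ?C = "{card S | S. S \<subseteq> SRV \<and> (\<forall>x\<in>S. \<forall>y\<in>S. \<not> R x y)}"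
  have "indep_number SRV R = Max ?C"
    unfolding indep_number_def ..
  also have "\<dots> = 2 * n - 2 - m0"
  proof (rule Max_eqI)
    have "?C \<subseteq> {..2 * n - 2 - m0}" using upper by auto
    then show "finite ?C" using finite_subset by blast
  next
    fix y assume "y \<in> ?C" then show "y \<le> 2 * n - 2 - m0" using upper by auto
  next
    obtain S where S: "S \<subseteq> SRV" "\<forall>x\<in>S. \<forall>y\<in>S. \<not> R x y" "2 * n - 2 - m0 = card S"
      using lower by metis
    then show "2 * n - 2 - m0 \<in> ?C" by blast
  qed
  finally show ?thesis unfolding beta_SR_def verts_eq .
qed

lemma atom: assumes i: "i < n" shows "atom_class_card n k i = k {i}"
proof -
  have perp: "perp V blowup_le blowup_bot x = {z \<in> V. fst x \<inter> fst z = {}}" if "x \<in> V" for x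
    unfolding perp_def using meet_iff[OF that] by auto
  have xV: "({i}, 1) \<in> V" using P_V[OF P1[OF proper_single[OF i]]] .
  have "eq_class V blowup_le blowup_bot ({i}, 1) = {y \<in> V. fst y = {i}}"
  proof (rule set_eqI)
    fix y
    show "y \<in> eq_class V blowup_le blowup_bot ({i}, 1) \<longleftrightarrow> y \<in> {y \<in> V. fst y = {i}}"
    proof
      assume "y \<in> eq_class V blowup_le blowup_bot ({i}, 1)"
      then have yV: "y \<in> V" and e: "perp V blowup_le blowup_bot y = perp V blowup_le blowup_bot ({i}, 1)"
        unfolding eq_class_def by auto
      have e2: "{z \<in> V. fst y \<inter> fst z = {}} = {z \<in> V. {i} \<inter> fst z = {}}"
        using e perp[OF yV] perp[OF xV] by simp
      have jV: "({j}, 1) \<in> V" if "j < n" for j using P_V[OF P1[OF proper_single[OF that]]] .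
      have "j \<in> fst y \<longleftrightarrow> j = i" if "j < n" for j
      proof -
        have "(({j}, 1) \<in> {z \<in> V. fst y \<inter> fst z = {}}) = (({j}, 1) \<in> {z \<in> V. {i} \<inter> fst z = {}})"
          using e2 by simp
        then show ?thesis using jV[OF that] by auto
      qed
      moreover have "fst y \<subseteq> {..<n}" using yV unfolding V_iff by auto
      ultimately have "fst y = {i}" using i by auto
      then show "y \<in> {y \<in> V. fst y = {i}}" using yV by auto
    next
      assume "y \<in> {y \<in> V. fst y = {i}}"
      then show "y \<in> eq_class V blowup_le blowup_bot ({i}, 1)"
        unfolding eq_class_def using perp xV by auto
    qed
  qed
  also have "\<dots> = Pair {i} ` {1..k {i}}"
    using proper_single[OF i] i unfolding V_iff by (auto simp: image_iff)
  finally show ?thesis unfolding atom_class_card_def by (simp add: card_image inj_on_def)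
qed

end

theorem mainTheorem10:
  fixes n m :: nat and k :: "nat set \<Rightarrow> nat"
  assumes "n \<ge> 3"
    and "\<forall>a. proper_elt n a \<longrightarrow> 1 \<le> k a"
  shows "((\<forall>a. proper_elt n a \<longrightarrow> k a = 1) \<longrightarrow> beta_SR n k = n - 2)
       \<and> ((\<forall>i<n. atom_class_card n k i \<ge> 2) \<longrightarrow> beta_SR n k = 2 * n - 2)
       \<and> (card {i. i < n \<and> atom_class_card n k i = 1} = m \<longrightarrow> beta_SR n k = 2 * n - m - 2)"
proof -
  interpret bl n k using assms by unfold_locales auto
  have cset: "{i. i < n \<and> atom_class_card n k i = 1} = {i. i < n \<and> k {i} = 1}"
    using atom by auto
  have m0le: "m0 \<le> n" unfolding m0_def using card_mono[of "{..<n}" "{i. i < n \<and> k {i} = 1}"] by auto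
  have 1: "beta_SR n k = n - 2" if "\<forall>a. proper_elt n a \<longrightarrow> k a = 1"
  proof -
    have "{i. i < n \<and> k {i} = 1} = {..<n}" using that proper_single by auto
    then have "m0 = n" unfolding m0_def by simp
    then show ?thesis using beta_eq by simp
  qed
  have 2: "beta_SR n k = 2 * n - 2" if "\<forall>i<n. atom_class_card n k i \<ge> 2"
  proof -
    have "{i. i < n \<and> k {i} = 1} = {}" using that atom by fastforce
    then have "m0 = 0" unfolding m0_def by simp
    then show ?thesis using beta_eq by simp
  qed
  have 3: "beta_SR n k = 2 * n - m - 2" if "card {i. i < n \<and> atom_class_card n k i = 1} = m"
  proof -
    have "m0 = m" using that cset unfolding m0_def by simp
    then show ?thesis using beta_eq by simp
  qed
  show ?thesis using 1 2 3 by blast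
qed



end
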